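(* Let $\{\epsilon_k\}$ be the sequence of penalty-barrier parameters produced by Algorithm LOG-DFL (defined in the context). Then $\lim_{k\to\infty}\epsilon_k=0$.
   Context: Problem data: $f:\mathbb{R}^n\to\mathbb{R}$, $g:\mathbb{R}^n\to\mathbb{R}^m$, $h:\mathbb{R}^n\to\mathbb{R}^q$ continuously differentiable; $l,u\in\mathbb{R}^n$ with $l<u$; $X=\{x: l\le x\le u\}$; $S_<=\{x: g(x)<0\}$; there is $x_0\in X\cap S_<$. Fix $\nu>1$. For $\epsilon>0$, $P(x;\epsilon)=f(x)-\epsilon\sum_{j=1}^m\log(-g_j(x))+\frac1\epsilon\sum_{j=1}^q|h_j(x)|^\nu$ if $x\in S_<$, and $P(x;\epsilon)=+\infty$ otherwise. $e^i$ is the $i$-th unit coordinate vector. Expansion Step$(\hat\alpha,y,p,\gamma)$ with parameter $\delta\in(0,1)$ (using the current parameter $\epsilon_k$): let $b$ be the largest $\beta\ge0$ with $y+\beta p\in X$; set $\alpha\leftarrow\hat\alpha$; repeat: $\check\alpha\leftarrow\min\{b,\alpha/\delta\}$; if $y+\check\alpha p\notin S_<$ return $\alpha$; else if $P(y+\check\alpha p;\epsilon_k)\le P(y;\epsilon_k)-\gamma\check\alpha^2$ set $\alpha\leftarrow\check\alpha$ and return if $\check\alpha=b$, else repeat; otherwise return $\alpha$. Algorithm LOG-DFL (parameters $\epsilon_0>0,\gamma>0,\theta\in(0,1),p>1,\delta\in(0,1)$, $\tilde\alpha_0^i>0$, $d_0^i=e^i$): for $k=0,1,\dots$: Step 1: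 set $y_k^1=x_k$. For $i=1,\dots,n$: (a) choose $\hat\alpha\in[0,\tilde\alpha_k^i]$ with $y_k^i+\hat\alpha d_k^i\in S_<\cap X$; if $\hat\alpha>0$ and $P(y_k^i+\hat\alpha d_k^i;\epsilon_k)\le P(y_k^i;\epsilon_k)-\gamma\hat\alpha^2$, let $\alpha_k^i$ be the output of the Expansion Step$(\hat\alpha,y_k^i,d_k^i,\gamma)$ and set $\tilde\alpha_{k+1}^i=\alpha_k^i$, $d_{k+1}^i=d_k^i$; (b) otherwise do the same with $-d_k^i$ in place of $d_k^i$, and on success set $\tilde\alpha_{k+1}^i=\alpha_k^i$, $d_{k+1}^i=-d_k^i$; (c) if neither succeeds set $\alpha_k^i=0$, $d_{k+1}^i=d_k^i$, $\tilde\alpha_{k+1}^i=\theta\tilde\alpha_k^i$. Then $y_k^{i+1}=y_k^i+\alpha_k^i d_{k+1}^i$. Step 2: let $(g_{\min})_k=\min_{i=1,\dots,n+1,\ \ell=1,\dots,m}|g_\ell(y_k^i)|$; if $\max_{i=1,\dots,n}\max\{\tilde\alpha_k^i,\alpha_k^i\}\le\min\{\epsilon_k^p,(g_{\min})_k^2\}$ set $\epsilon_{k+1}=\theta\epsilon_k$, else $\epsilon_{k+1}=\epsilon_k$. Step 3: choose any $x_{k+1}\in S_<\cap X$ with $P(x_{k+1};\epsilon_k)\le P(y_k^{n+1};\epsilon_k)$. *)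

theory Defs
  imports "HOL-Analysis.Analysis"
begin

definition C1_fun :: "('a::real_normed_vector \<Rightarrow> 'b::real_normed_vector) \<Rightarrow> bool" where
  "C1_fun F \<longleftrightarrow> (\<exists>F'. (\<forall>x. (F has_derivative blinfun_apply (F' x)) (at x)) \<and> continuous_on UNIV F')"

definition box_set :: "real^'n \<Rightarrow> real^'n \<Rightarrow> (real^'n) set" where
  "box_set l u = {x. \<forall>i. l $ i \<le> x $ i \<and> x $ i \<le> u $ i}"

definition strict_feas :: "(real^'n \<Rightarrow> real^'m) \<Rightarrow> (real^'n) set" where
  "strict_feas g = {x. \<forall>j. g x $ j < 0}"

text \<open>Penalty-barrier function P(x;eps), with value +infinity outside S_<.
  The equality constraints are h_0,...,h_(q-1).\<close>
definition penalty ::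
  "(real^'n \<Rightarrow> real) \<Rightarrow> (real^'n \<Rightarrow> real^'m) \<Rightarrow> nat \<Rightarrow> (nat \<Rightarrow> real^'n \<Rightarrow> real)
     \<Rightarrow> real \<Rightarrow> real \<Rightarrow> real^'n \<Rightarrow> ereal" where
  "penalty f g q h \<nu> \<epsilon> x =
     (if x \<in> strict_feas g
      then ereal (f x - \<epsilon> * (\<Sum>j\<in>UNIV. ln (- (g x $ j)))
                  + (1 / \<epsilon>) * (\<Sum>j<q. \<bar>h j x\<bar> powr \<nu>))
      else \<infinity>)"

definition max_step :: "real^'n \<Rightarrow> real^'n \<Rightarrow> real^'n \<Rightarrow> real^'n \<Rightarrow> real" where
  "max_step l u y p = Sup {\<beta>. 0 \<le> \<beta> \<and> y + \<beta> *\<^sub>R p \<in> box_set l u}"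

text \<open>Expansion Step: expand Pf S l u delta gamma y p a r means that the repeat-loop,
  entered with current value alpha = a, returns r.  The output of
  Expansion Step(ahat,y,p,gamma) is the r with expand ... y p ahat r.\<close>
inductive expand ::
  "(real^'n \<Rightarrow> ereal) \<Rightarrow> (real^'n) set \<Rightarrow> real^'n \<Rightarrow> real^'n \<Rightarrow> real \<Rightarrow> real
     \<Rightarrow> real^'n \<Rightarrow> real^'n \<Rightarrow> real \<Rightarrow> real \<Rightarrow> bool"
  for Pf S l u \<delta> \<gamma> y p where
  exp_out: "ac = min (max_step l u y p) (a / \<delta>) \<Longrightarrow> y + ac *\<^sub>R p \<notin> S
     \<Longrightarrow> expand Pf S l u \<delta> \<gamma> y p a a"
| exp_fail: "ac = min (max_step l u y p) (a / \<delta>) \<Longrightarrow> y + ac *\<^sub>R p \<in> S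
     \<Longrightarrow> \<not> (Pf (y + ac *\<^sub>R p) \<le> Pf y - ereal (\<gamma> * ac\<^sup>2))
     \<Longrightarrow> expand Pf S l u \<delta> \<gamma> y p a a"
| exp_bound: "ac = min (max_step l u y p) (a / \<delta>) \<Longrightarrow> y + ac *\<^sub>R p \<in> S
     \<Longrightarrow> Pf (y + ac *\<^sub>R p) \<le> Pf y - ereal (\<gamma> * ac\<^sup>2)
     \<Longrightarrow> ac = max_step l u y p
     \<Longrightarrow> expand Pf S l u \<delta> \<gamma> y p a ac"
| exp_step: "ac = min (max_step l u y p) (a / \<delta>) \<Longrightarrow> y + ac *\<^sub>R p \<in> S
     \<Longrightarrow> Pf (y + ac *\<^sub>R p) \<le> Pf y - ereal (\<gamma> * ac\<^sup>2)
     \<Longrightarrow> ac \<noteq> max_step l u y p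
     \<Longrightarrow> expand Pf S l u \<delta> \<gamma> y p ac r
     \<Longrightarrow> expand Pf S l u \<delta> \<gamma> y p a r"

text \<open>Coordinates are processed in the order
  ix 0, ..., ix (n-1) (n = CARD('n)); inner index i = 0..n-1 corresponds to the
  paper's i = 1..n and y k i to the paper's y_k^(i+1).
  atil k i = tilde alpha_k^i, alpha k i = alpha_k^i, d k i = d_k^i, eps k = eps_k;
  ahp k i / ahn k i are the trial steps hat alpha chosen in (a) / (b).\<close>
definition logdfl_run ::
  "(real^'n \<Rightarrow> real) \<Rightarrow> (real^'n \<Rightarrow> real^'m) \<Rightarrow> nat \<Rightarrow> (nat \<Rightarrow> real^'n \<Rightarrow> real) \<Rightarrow> real
   \<Rightarrow> real^'n \<Rightarrow> real^'n
   \<Rightarrow> real \<Rightarrow> real \<Rightarrow> real \<Rightarrow> real \<Rightarrow> real \<Rightarrow> (nat \<Rightarrow> 'n)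
   \<Rightarrow> (nat \<Rightarrow> real^'n) \<Rightarrow> (nat \<Rightarrow> real) \<Rightarrow> (nat \<Rightarrow> nat \<Rightarrow> real) \<Rightarrow> (nat \<Rightarrow> nat \<Rightarrow> real)
   \<Rightarrow> (nat \<Rightarrow> nat \<Rightarrow> real^'n) \<Rightarrow> (nat \<Rightarrow> nat \<Rightarrow> real^'n)
   \<Rightarrow> (nat \<Rightarrow> nat \<Rightarrow> real) \<Rightarrow> (nat \<Rightarrow> nat \<Rightarrow> real) \<Rightarrow> bool" where
  "logdfl_run f g q h \<nu> l u \<epsilon>0 \<gamma> \<theta> pe \<delta> ix x eps atil alpha d y ahp ahn \<longleftrightarrow>
   (let n = CARD('n); X = box_set l u; S = strict_feas g;
        P = (\<lambda>e. penalty f g q h \<nu> e) in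
    x 0 \<in> X \<inter> S \<and> eps 0 = \<epsilon>0 \<and>
    (\<forall>i<n. atil 0 i > 0 \<and> d 0 i = axis (ix i) 1) \<and>
    (\<forall>k.
       y k 0 = x k \<and>
       (\<forall>i<n.
          (let Pk = P (eps k); yi = y k i; D = d k i; A = atil k i;
               succ = (\<lambda>a dir. 0 < a \<and> Pk (yi + a *\<^sub>R dir) \<le> Pk yi - ereal (\<gamma> * a\<^sup>2))
           in 0 \<le> ahp k i \<and> ahp k i \<le> A \<and> yi + ahp k i *\<^sub>R D \<in> S \<inter> X \<and>
              (if succ (ahp k i) D
               then expand Pk S l u \<delta> \<gamma> yi D (ahp k i) (alpha k i)
                    \<and> atil (Suc k) i = alpha k i \<and> d (Suc k) i = D
               else 0 \<le> ahn k i \<and> ahn k i \<le> A \<and> yi + ahn k i *\<^sub>R (- D) \<in> S \<inter> X \<and>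
                    (if succ (ahn k i) (- D)
                     then expand Pk S l u \<delta> \<gamma> yi (- D) (ahn k i) (alpha k i)
                          \<and> atil (Suc k) i = alpha k i \<and> d (Suc k) i = - D
                     else alpha k i = 0 \<and> d (Suc k) i = D \<and> atil (Suc k) i = \<theta> * A))
              \<and> y k (Suc i) = yi + alpha k i *\<^sub>R d (Suc k) i)) \<and>
       eps (Suc k) =
         (if (MAX i\<in>{..<n}. max (atil k i) (alpha k i))
               \<le> min (eps k powr pe) ((Min {\<bar>g (y k i) $ j\<bar> | i j. i \<le> n})\<^sup>2)
          then \<theta> * eps k else eps k) \<and>
       x (Suc k) \<in> S \<inter> X \<and> P (eps k) (x (Suc k)) \<le> P (eps k) (y k n)))"

end

theory Submission
  imports Defs
begin


lemma box_cbox: "box_set l u = cbox l u"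
  by (auto simp: box_set_def mem_box_cart)

lemma C1_cont: "C1_fun F \<Longrightarrow> continuous_on A F"
proof -
  assume "C1_fun F"
  then obtain F' where "\<forall>x. (F has_derivative blinfun_apply (F' x)) (at x)"
    unfolding C1_fun_def by blast
  then have "\<forall>x\<in>A. isCont F x" using has_derivative_continuous by blast
  then show ?thesis by (simp add: continuous_at_imp_continuous_on)
qed

lemma max_step_props:
  fixes y p :: "real^'n"
  assumes y: "y \<in> box_set l u" and p: "p \<noteq> 0"
  shows "0 \<le> max_step l u y p \<and> (\<forall>\<beta>. 0 \<le> \<beta> \<and> \<beta> \<le> max_step l u y p \<longrightarrow> y + \<beta> *\<^sub>R p \<in> box_set l u)"
proof -
  define B where "B = {\<beta>. 0 \<le> \<beta> \<and> y + \<beta> *\<^sub>R p \<in> cbox l u}"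
  have yc: "y \<in> cbox l u" using y box_cbox by blast
  have "0 \<in> B" using yc by (simp add: B_def)
  obtain R where R: "\<forall>z\<in>cbox l u. norm z \<le> R"
    using compact_imp_bounded[OF compact_cbox] bounded_iff by blast
  have np: "norm p > 0" using p by simp
  have bdd: "bdd_above B"
  proof (rule bdd_aboveI)
    fix b assume "b \<in> B"
    then have b0: "0 \<le> b" and bm: "y + b *\<^sub>R p \<in> cbox l u" by (auto simp: B_def)
    have "b * norm p = norm (b *\<^sub>R p)" using b0 by simp
    also have "\<dots> \<le> norm (y + b *\<^sub>R p) + norm y" by (metis add_diff_cancel_left' norm_triangle_ineq4 add.commute)
    also have "\<dots> \<le> R + norm y" using R bm by auto
    finally show "b \<le> (R + norm y) / norm p" using np by (simp add: field_simps)
  qed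
  have cl: "closed B"
  proof -
    have "B = {0..} \<inter> (\<lambda>\<beta>. y + \<beta> *\<^sub>R p) -` cbox l u" by (auto simp: B_def)
    moreover have "closed ((\<lambda>\<beta>::real. y + \<beta> *\<^sub>R p) -` cbox l u)"
      by (intro continuous_closed_vimage closed_cbox) (auto intro!: continuous_intros)
    ultimately show ?thesis by (simp add: closed_Int)
  qed
  have ms: "max_step l u y p = Sup B" by (simp add: max_step_def B_def box_cbox)
  have SB: "Sup B \<in> B" using closed_contains_Sup[OF _ bdd cl] \<open>0 \<in> B\<close> by blast
  have S0: "0 \<le> Sup B" using cSup_upper[OF \<open>0 \<in> B\<close> bdd] .
  have "y + \<beta> *\<^sub>R p \<in> cbox l u" if "0 \<le> \<beta>" "\<beta> \<le> Sup B" for \<beta>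
  proof (cases "Sup B = 0")
    case True then show ?thesis using that yc by simp
  next
    case False
    then have pos: "Sup B > 0" using S0 by simp
    define t where "t = \<beta> / Sup B"
    have t: "0 \<le> t" "t \<le> 1" using that pos by (auto simp: t_def field_simps)
    have e: "y + \<beta> *\<^sub>R p = (1 - t) *\<^sub>R y + t *\<^sub>R (y + Sup B *\<^sub>R p)"
      using pos by (simp add: t_def algebra_simps)
    have "y + Sup B *\<^sub>R p \<in> cbox l u" using SB by (simp add: B_def)
    then show ?thesis unfolding e using convex_box(1) yc t
      by (simp add: convexD)
  qed
  then show ?thesis using ms S0 box_cbox by auto
qed




lemma expand_dec:
  assumes "expand Pf S l u \<delta> \<gamma> y p a r"
    and "Pf (y + a *\<^sub>R p) \<le> Pf y - ereal (\<gamma> * a\<^sup>2)" "0 \<le> a"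
    "y + a *\<^sub>R p \<in> S" "y + a *\<^sub>R p \<in> box_set l u"
    and y: "y \<in> box_set l u" and p: "p \<noteq> 0" and d: "0 < \<delta>"
  shows "Pf (y + r *\<^sub>R p) \<le> Pf y - ereal (\<gamma> * r\<^sup>2) \<and> 0 \<le> r \<and> y + r *\<^sub>R p \<in> S
     \<and> y + r *\<^sub>R p \<in> box_set l u"
  using assms(1-5)
proof (induction rule: expand.induct)
  case (exp_out ac a) then show ?case by simp
next
  case (exp_fail ac a) then show ?case by simp
next
  case (exp_bound ac a)
  have ms: "0 \<le> max_step l u y p" "\<forall>\<beta>. 0 \<le> \<beta> \<and> \<beta> \<le> max_step l u y p \<longrightarrow> y + \<beta> *\<^sub>R p \<in> box_set l u"
    using max_step_props[OF y p] by auto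
  have "0 \<le> ac" using exp_bound ms d by simp
  then show ?case using exp_bound ms by auto
next
  case (exp_step ac a r)
  have ms: "0 \<le> max_step l u y p" "\<forall>\<beta>. 0 \<le> \<beta> \<and> \<beta> \<le> max_step l u y p \<longrightarrow> y + \<beta> *\<^sub>R p \<in> box_set l u"
    using max_step_props[OF y p] by auto
  have "0 \<le> ac" using exp_step ms d by simp
  moreover have "ac \<le> max_step l u y p" using exp_step by simp
  ultimately show ?case using exp_step ms by auto
qed

lemma atil_to_zero:
  fixes a b :: "nat \<Rightarrow> real"
  assumes b: "b \<longlonglongrightarrow> 0" and rec: "\<And>k. a (Suc k) = b k \<or> a (Suc k) = \<theta> * a k"
    and th: "0 \<le> \<theta>" "\<theta> < 1"
  shows "a \<longlonglongrightarrow> 0"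
proof (rule LIMSEQ_I)
  fix r :: real assume r: "0 < r"
  define e where "e = r / 2"
  have e: "0 < e" "e < r" using r by (auto simp: e_def)
  obtain K where K: "\<And>k. k \<ge> K \<Longrightarrow> norm (b k - 0) < e" using LIMSEQ_D[OF b e(1)] by blast
  have bnd: "\<bar>a (K + m)\<bar> \<le> max e (\<theta> ^ m * \<bar>a K\<bar>)" for m
  proof (induction m)
    case 0 then show ?case by simp
  next
    case (Suc m)
    have "a (Suc (K + m)) = b (K + m) \<or> a (Suc (K + m)) = \<theta> * a (K + m)" using rec by blast
    then show ?case
    proof
      assume "a (Suc (K + m)) = b (K + m)"
      then show ?thesis using K[of "K+m"] by auto
    next
      assume h: "a (Suc (K + m)) = \<theta> * a (K + m)"
      have "\<bar>a (K + Suc m)\<bar> = \<theta> * \<bar>a (K + m)\<bar>" using h th by (simp add: abs_mult)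
      also have "\<dots> \<le> \<theta> * max e (\<theta> ^ m * \<bar>a K\<bar>)" using Suc th by (simp add: mult_left_mono)
      also have "\<dots> \<le> max e (\<theta> ^ Suc m * \<bar>a K\<bar>)"
      proof -
        have "\<theta> * e \<le> e" using th e by (simp add: mult_left_le_one_le)
        moreover have "\<theta> * (\<theta> ^ m * \<bar>a K\<bar>) = \<theta> ^ Suc m * \<bar>a K\<bar>" by simp
        ultimately show ?thesis using th unfolding max_def
          by (smt (verit) mult_left_mono)
      qed
      finally show ?thesis .
    qed
  qed
  have "(\<lambda>m. \<theta> ^ m * \<bar>a K\<bar>) \<longlonglongrightarrow> 0"
    using th by (intro tendsto_mult_left_zero LIMSEQ_power_zero) auto
  then obtain M where M: "\<And>m. m \<ge> M \<Longrightarrow> norm (\<theta> ^ m * \<bar>a K\<bar> - 0) < e"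
    using LIMSEQ_D e(1) by blast
  show "\<exists>no. \<forall>n\<ge>no. norm (a n - 0) < r"
  proof (intro exI allI impI)
    fix n assume n: "K + M \<le> n"
    define m where "m = n - K"
    have m: "n = K + m" "m \<ge> M" using n by (auto simp: m_def)
    have "\<theta> ^ m * \<bar>a K\<bar> < e" using M[OF m(2)] by simp
    then show "norm (a n - 0) < r" using bnd[of m] m e by auto
  qed
qed




definition pr :: "(real^'n \<Rightarrow> real) \<Rightarrow> (real^'n \<Rightarrow> real^'m) \<Rightarrow> nat \<Rightarrow> (nat \<Rightarrow> real^'n \<Rightarrow> real)
     \<Rightarrow> real \<Rightarrow> real \<Rightarrow> real^'n \<Rightarrow> real" where
  "pr f g q h \<nu> e z = f z - e * (\<Sum>j\<in>UNIV. ln (- (g z $ j))) + (1 / e) * (\<Sum>j<q. \<bar>h j z\<bar> powr \<nu>)"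

lemma pen_pr: "z \<in> strict_feas g \<Longrightarrow> penalty f g q h \<nu> e z = ereal (pr f g q h \<nu> e z)"
  by (simp add: penalty_def pr_def)

lemma pen_notS: "z \<notin> strict_feas g \<Longrightarrow> penalty f g q h \<nu> e z = \<infinity>"
  by (simp add: penalty_def)

lemma pen_bounds:
  fixes f :: "real^'n \<Rightarrow> real" and g :: "real^'n \<Rightarrow> real^'m"
  assumes cf: "C1_fun f" and cg: "C1_fun g" and e: "e > 0"
  shows "\<exists>Pmin. \<forall>z\<in>box_set l u \<inter> strict_feas g. Pmin \<le> pr f g q h \<nu> e z"
    and "\<exists>c>0. \<forall>z\<in>box_set l u \<inter> strict_feas g. pr f g q h \<nu> e z \<le> C \<longrightarrow> (\<forall>j. c \<le> \<bar>g z $ j\<bar>)"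
proof -
  have "bounded (f ` cbox l u)"
    by (intro compact_imp_bounded compact_continuous_image C1_cont[OF cf] compact_cbox)
  then obtain F where F: "\<forall>z\<in>cbox l u. \<bar>f z\<bar> \<le> F" unfolding bounded_iff by auto
  have "bounded (g ` cbox l u)"
    by (intro compact_imp_bounded compact_continuous_image C1_cont[OF cg] compact_cbox)
  then obtain G0 where G0: "\<forall>z\<in>cbox l u. norm (g z) \<le> G0" unfolding bounded_iff by auto
  define G where "G = max G0 1"
  have G1: "G \<ge> 1" by (simp add: G_def)
  have lnG: "ln G \<ge> 0" using G1 by simp
  have gb: "0 < - (g z $ j) \<and> ln (- (g z $ j)) \<le> ln G" if "z \<in> box_set l u \<inter> strict_feas g" for z j
  proof -
    have neg: "g z $ j < 0" using that by (simp add: strict_feas_def)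
    have "\<bar>g z $ j\<bar> \<le> norm (g z)" by (rule component_le_norm_cart)
    also have "\<dots> \<le> G" using G0 that box_cbox[of l u] by (auto simp: G_def)
    finally have "- (g z $ j) \<le> G" using neg by simp
    then show ?thesis using neg by simp
  qed
  have pen0: "0 \<le> (1 / e) * (\<Sum>j<q. \<bar>h j z\<bar> powr \<nu>)" for z
    using e by (intro mult_nonneg_nonneg sum_nonneg) auto
  have sumb: "(\<Sum>j\<in>UNIV. ln (- (g z $ j))) \<le> real CARD('m) * ln G"
    if "z \<in> box_set l u \<inter> strict_feas g" for z
  proof -
    have "(\<Sum>j\<in>UNIV. ln (- (g z $ j))) \<le> (\<Sum>j\<in>(UNIV::'m set). ln G)"
      using gb[OF that] by (intro sum_mono) auto
    then show ?thesis by simp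
  qed
  have fb: "\<bar>f z\<bar> \<le> F" if "z \<in> box_set l u \<inter> strict_feas g" for z
    using F that box_cbox[of l u] by auto
  show "\<exists>Pmin. \<forall>z\<in>box_set l u \<inter> strict_feas g. Pmin \<le> pr f g q h \<nu> e z"
  proof (intro exI ballI)
    fix z assume z: "z \<in> box_set l u \<inter> strict_feas g"
    have "e * (\<Sum>j\<in>UNIV. ln (- (g z $ j))) \<le> e * (real CARD('m) * ln G)"
      using sumb[OF z] e by (simp add: mult_left_mono)
    then show "- F - e * (real CARD('m) * ln G) \<le> pr f g q h \<nu> e z"
      using fb[OF z] pen0[of z] unfolding pr_def by linarith
  qed
  define K where "K = F + C + e * (real CARD('m) * ln G)"
  show "\<exists>c>0. \<forall>z\<in>box_set l u \<inter> strict_feas g. pr f g q h \<nu> e z \<le> C \<longrightarrow> (\<forall>j. c \<le> \<bar>g z $ j\<bar>)"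
  proof (intro exI conjI ballI impI allI)
    show "0 < exp (- K / e)" by simp
    fix z j assume z: "z \<in> box_set l u \<inter> strict_feas g" and pC: "pr f g q h \<nu> e z \<le> C"
    have "e * (\<Sum>j\<in>UNIV. ln (- (g z $ j))) \<ge> - F - C"
      using pC fb[OF z] pen0[of z] unfolding pr_def by linarith
    moreover have "(\<Sum>j\<in>UNIV. ln (- (g z $ j))) = ln (- (g z $ j)) + (\<Sum>i\<in>UNIV - {j}. ln (- (g z $ i)))"
      by (simp add: sum.remove)
    moreover have "(\<Sum>i\<in>UNIV - {j}. ln (- (g z $ i))) \<le> (\<Sum>i\<in>UNIV - {j}. ln G)"
      using gb[OF z] by (intro sum_mono) auto
    moreover have "(\<Sum>i\<in>(UNIV::'m set) - {j}. ln G) \<le> real CARD('m) * ln G"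
      using lnG by (simp add: card_Diff_singleton mult_right_mono)
    ultimately have "e * ln (- (g z $ j)) \<ge> - K"
      unfolding K_def using e by (smt (verit, ccfv_SIG) distrib_left mult_left_mono)
    then have "ln (- (g z $ j)) \<ge> - K / e" using e by (simp add: field_simps)
    then have "exp (- K / e) \<le> exp (ln (- (g z $ j)))" by simp
    also have "\<dots> = - (g z $ j)" using gb[OF z, of j] by simp
    finally show "exp (- K / e) \<le> \<bar>g z $ j\<bar>" by simp
  qed
qed




abbreviation LETB where
 "LETB Pk0 yi0 D0 A0 S X l u \<delta> \<gamma> \<theta> ap an al at' d' y' \<equiv>
  (let Pk = Pk0; yi = yi0; D = D0; A = A0;
               succ = (\<lambda>a dir. 0 < a \<and> Pk (yi + a *\<^sub>R dir) \<le> Pk yi - ereal (\<gamma> * a\<^sup>2))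
           in 0 \<le> ap \<and> ap \<le> A \<and> yi + ap *\<^sub>R D \<in> S \<inter> X \<and>
              (if succ ap D
               then expand Pk S l u \<delta> \<gamma> yi D ap al
                    \<and> at' = al \<and> d' = D
               else 0 \<le> an \<and> an \<le> A \<and> yi + an *\<^sub>R (- D) \<in> S \<inter> X \<and>
                    (if succ an (- D)
                     then expand Pk S l u \<delta> \<gamma> yi (- D) an al
                          \<and> at' = al \<and> d' = - D
                     else al = 0 \<and> d' = D \<and> at' = \<theta> * A))
              \<and> y' = yi + al *\<^sub>R d')"

lemma step_d:
  assumes "LETB Pk0 yi0 D0 A0 S X l u \<delta> \<gamma> \<theta> ap an al at' d' y'"
  shows "(d' = D0 \<or> d' = - D0) \<and> (at' = al \<or> at' = \<theta> * A0)"
  using assms unfolding Let_def by (auto split: if_splits)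

lemma step:
  fixes f :: "real^'n \<Rightarrow> real" and g :: "real^'n \<Rightarrow> real^'m"
  assumes L: "LETB (penalty f g q h \<nu> e) yi0 D0 A0 (strict_feas g) (box_set l u) l u \<delta> \<gamma> \<theta> ap an al at' d' y'"
    and yi: "yi0 \<in> strict_feas g \<inter> box_set l u" and D: "D0 \<noteq> 0" and dl: "0 < \<delta>"
  shows "y' \<in> strict_feas g \<inter> box_set l u \<and>
     pr f g q h \<nu> e y' \<le> pr f g q h \<nu> e yi0 - \<gamma> * al\<^sup>2 \<and> 0 \<le> al"
proof -
  let ?P = "penalty f g q h \<nu> e"
  let ?S = "strict_feas g" and ?X = "box_set l u"
  have conv: "pr f g q h \<nu> e z \<le> pr f g q h \<nu> e yi0 - \<gamma> * a\<^sup>2"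
    if "z \<in> ?S" "?P z \<le> ?P yi0 - ereal (\<gamma> * a\<^sup>2)" for z a
  proof -
    have "ereal (pr f g q h \<nu> e z) \<le> ereal (pr f g q h \<nu> e yi0) - ereal (\<gamma> * a\<^sup>2)"
      using that yi pen_pr[of z g f q h \<nu> e] pen_pr[of yi0 g f q h \<nu> e] by simp
    then show ?thesis by simp
  qed
  have gen: "y' \<in> ?S \<inter> ?X \<and> pr f g q h \<nu> e y' \<le> pr f g q h \<nu> e yi0 - \<gamma> * al\<^sup>2 \<and> 0 \<le> al"
    if ex: "expand ?P ?S l u \<delta> \<gamma> yi0 p a al" and sc: "0 < a \<and> ?P (yi0 + a *\<^sub>R p) \<le> ?P yi0 - ereal (\<gamma> * a\<^sup>2)"
      and mem: "yi0 + a *\<^sub>R p \<in> ?S \<inter> ?X" and p: "p \<noteq> 0" and y': "y' = yi0 + al *\<^sub>R p" for p a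
  proof -
    have "?P (yi0 + al *\<^sub>R p) \<le> ?P yi0 - ereal (\<gamma> * al\<^sup>2) \<and> 0 \<le> al \<and> yi0 + al *\<^sub>R p \<in> ?S
     \<and> yi0 + al *\<^sub>R p \<in> ?X"
      using expand_dec[OF ex] sc mem yi p dl by auto
    then show ?thesis using conv y' by auto
  qed
  show ?thesis
  proof (cases "0 < ap \<and> ?P (yi0 + ap *\<^sub>R D0) \<le> ?P yi0 - ereal (\<gamma> * ap\<^sup>2)")
    case True
    then have "expand ?P ?S l u \<delta> \<gamma> yi0 D0 ap al" "d' = D0" "y' = yi0 + al *\<^sub>R d'" "yi0 + ap *\<^sub>R D0 \<in> ?S \<inter> ?X"
      using L unfolding Let_def by auto
    then show ?thesis using gen[of D0 ap] True D by auto
  next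
    case F1: False
    show ?thesis
    proof (cases "0 < an \<and> ?P (yi0 + an *\<^sub>R (- D0)) \<le> ?P yi0 - ereal (\<gamma> * an\<^sup>2)")
      case True
      then have "expand ?P ?S l u \<delta> \<gamma> yi0 (- D0) an al" "d' = - D0" "y' = yi0 + al *\<^sub>R d'"
          "yi0 + an *\<^sub>R (- D0) \<in> ?S \<inter> ?X"
        using L F1 unfolding Let_def by auto
      then show ?thesis using gen[of "- D0" an] True D by auto
    next
      case False
      then have "al = 0" "y' = yi0 + al *\<^sub>R d'"
        using L F1 unfolding Let_def by auto
      then show ?thesis using yi by simp
    qed
  qed
qed




theorem proposition4p1:
  fixes f :: "real^'n \<Rightarrow> real" and g :: "real^'n \<Rightarrow> real^'m"
    and q :: nat and h :: "nat \<Rightarrow> real^'n \<Rightarrow> real"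
    and l u :: "real^'n" and \<nu> \<epsilon>0 \<gamma> \<theta> pe \<delta> :: real
    and ix :: "nat \<Rightarrow> 'n"
    and x :: "nat \<Rightarrow> real^'n" and eps :: "nat \<Rightarrow> real"
    and atil alpha ahp ahn :: "nat \<Rightarrow> nat \<Rightarrow> real"
    and d y :: "nat \<Rightarrow> nat \<Rightarrow> real^'n"
  assumes "C1_fun f" and "C1_fun g" and "\<forall>j<q. C1_fun (h j)"
    and "\<forall>i. l $ i < u $ i"
    and "box_set l u \<inter> strict_feas g \<noteq> {}"
    and "\<nu> > 1"
    and "\<epsilon>0 > 0" and "\<gamma> > 0" and "0 < \<theta>" and "\<theta> < 1" and "pe > 1"
    and "0 < \<delta>" and "\<delta> < 1"
    and "bij_betw ix {..<CARD('n)} UNIV"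
    and "logdfl_run f g q h \<nu> l u \<epsilon>0 \<gamma> \<theta> pe \<delta> ix x eps atil alpha d y ahp ahn"
  shows "eps \<longlonglongrightarrow> 0"
proof -
  note R = assms(15)[unfolded logdfl_run_def Let_def]
  define n where "n = CARD('n)"
  define X where "X = box_set l u"
  define S where "S = strict_feas g"
  define P where "P = (\<lambda>e. penalty f g q h \<nu> e)"
  define Q where "Q = (\<lambda>e. pr f g q h \<nu> e)"
  have x0: "x 0 \<in> S \<inter> X" using R by (auto simp: S_def X_def)
  have eps0: "eps 0 = \<epsilon>0" using R by blast
  have init: "\<forall>i<n. atil 0 i > 0 \<and> d 0 i = axis (ix i) 1" using R by (simp add: n_def)
  have yx: "y k 0 = x k" for k using R by blast
  have LB: "LETB (P (eps k)) (y k i) (d k i) (atil k i) S X l u \<delta> \<gamma> \<theta> (ahp k i) (ahn k i)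
      (alpha k i) (atil (Suc k) i) (d (Suc k) i) (y k (Suc i))" if "i < n" for k i
    using R that unfolding Let_def n_def P_def S_def X_def by blast
  have epsS: "eps (Suc k) =
         (if (MAX i\<in>{..<n}. max (atil k i) (alpha k i))
               \<le> min (eps k powr pe) ((Min {\<bar>g (y k i) $ j\<bar> | i j. i \<le> n})\<^sup>2)
          then \<theta> * eps k else eps k)" for k using R by (simp add: n_def)
  have xS: "x (Suc k) \<in> S \<inter> X" "P (eps k) (x (Suc k)) \<le> P (eps k) (y k n)" for k
    using R by (auto simp: n_def P_def S_def X_def)

  have n0: "0 < n" by (simp add: n_def)
  have PQ: "P e z = ereal (Q e z)" if "z \<in> S" for e z
    using that pen_pr by (simp add: P_def Q_def S_def)
  have epsalt: "eps (Suc k) = \<theta> * eps k \<or> eps (Suc k) = eps k" for k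
    using epsS[of k] by (auto split: if_splits)
  have epspos: "eps k > 0" for k
  proof (induction k)
    case 0 then show ?case using eps0 assms(7) by simp
  next
    case (Suc k) then show ?case using epsalt[of k] assms(9) by auto
  qed
  have epsdec: "eps (Suc k) \<le> eps k" for k
    using epsalt[of k] epspos[of k] assms(10) by (auto simp: mult_le_cancel_right1)
  have dalt: "(d (Suc k) i = d k i \<or> d (Suc k) i = - d k i) \<and>
      (atil (Suc k) i = alpha k i \<or> atil (Suc k) i = \<theta> * atil k i)" if "i < n" for k i
    using step_d[OF LB[OF that]] .
  have dnorm: "norm (d k i) = 1" if "i < n" for k i
  proof (induction k)
    case 0 then show ?case using init that by simp
  next
    case (Suc k) then show ?case using dalt[OF that, of k] by auto
  qed
  have dnz: "d k i \<noteq> 0" if "i < n" for k i using dnorm[OF that, of k] by auto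
  have xmem: "x k \<in> S \<inter> X" for k
    by (cases k) (use x0 xS in auto)
  have inner: "y k i \<in> S \<inter> X \<and> Q (eps k) (y k i) \<le> Q (eps k) (x k) - \<gamma> * (\<Sum>j<i. (alpha k j)\<^sup>2)
      \<and> (\<forall>j<i. 0 \<le> alpha k j)" if "i \<le> n" for k i
    using that
  proof (induction i)
    case 0 then show ?case using yx xmem by simp
  next
    case (Suc i)
    then have i: "i < n" and IH: "y k i \<in> S \<inter> X"
        "Q (eps k) (y k i) \<le> Q (eps k) (x k) - \<gamma> * (\<Sum>j<i. (alpha k j)\<^sup>2)" "\<forall>j<i. 0 \<le> alpha k j"
      by auto
    have st: "y k (Suc i) \<in> S \<inter> X \<and> Q (eps k) (y k (Suc i)) \<le> Q (eps k) (y k i) - \<gamma> * (alpha k i)\<^sup>2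
        \<and> 0 \<le> alpha k i"
      using step[OF LB[OF i, of k, unfolded P_def S_def X_def], OF _ dnz[OF i] assms(12)] IH(1)
      by (simp add: Q_def S_def X_def)
    then show ?case using IH by (auto simp: less_Suc_eq distrib_left)
  qed
  define s where "s = (\<lambda>k. \<Sum>j<n. (alpha k j)\<^sup>2)"
  have s0: "0 \<le> s k" for k by (simp add: s_def sum_nonneg)
  have outer: "Q (eps k) (x (Suc k)) \<le> Q (eps k) (x k) - \<gamma> * s k" for k
  proof -
    have "ereal (Q (eps k) (x (Suc k))) \<le> ereal (Q (eps k) (y k n))"
      using xS[of k] PQ inner[of n k] by auto
    then show ?thesis using inner[of n k] by (simp add: s_def)
  qed
  have alpha0: "0 \<le> alpha k i" if "i < n" for k i using inner[of n k] that by auto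
  show ?thesis
  proof (rule ccontr)
    assume nz: "\<not> eps \<longlonglongrightarrow> 0"
    have "decseq eps" using epsdec by (simp add: decseq_SucI)
    then obtain L where L: "eps \<longlonglongrightarrow> L" "\<forall>i. L \<le> eps i"
    proof -
      have "\<forall>i. 0 \<le> eps i" using epspos less_eq_real_def by blast
      from decseq_convergent[OF \<open>decseq eps\<close> this] that show ?thesis by blast
    qed
    have Lpos: "L > 0"
    proof -
      have "L \<ge> 0" using L(1) epspos by (meson LIMSEQ_le_const less_eq_real_def)
      moreover have "L \<noteq> 0" using nz L(1) by auto
      ultimately show ?thesis by simp
    qed
    have "(\<lambda>k. eps k - eps (Suc k)) \<longlonglongrightarrow> L - L"
      using L(1) by (intro tendsto_diff LIMSEQ_Suc) auto
    moreover have "(1 - \<theta>) * L > 0" using Lpos assms(10) by simp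
    ultimately obtain K where K: "\<And>k. k \<ge> K \<Longrightarrow> norm (eps k - eps (Suc k) - (L - L)) < (1 - \<theta>) * L"
      using LIMSEQ_D by blast
    have const1: "eps (Suc k) = eps k" if "k \<ge> K" for k
    proof (rule ccontr)
      assume "eps (Suc k) \<noteq> eps k"
      then have "eps (Suc k) = \<theta> * eps k" using epsalt by blast
      then have "eps k - eps (Suc k) = (1 - \<theta>) * eps k" by (simp add: algebra_simps)
      moreover have "(1 - \<theta>) * L \<le> (1 - \<theta>) * eps k" using L(2) assms(10) by (simp add: mult_left_mono)
      ultimately show False using K[OF that] epspos[of k] epsdec[of k] by simp
    qed
    define eb where "eb = eps K"
    have ebpos: "eb > 0" using epspos by (simp add: eb_def)
    have const: "eps (K + m) = eb" for m
      by (induction m) (auto simp: eb_def const1)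
    have constk: "eps k = eb" if "k \<ge> K" for k
      using const[of "k - K"] that by simp
    obtain Pmin where Pmin: "\<forall>z\<in>X \<inter> S. Pmin \<le> Q eb z"
      using pen_bounds(1)[OF assms(1,2) ebpos, where l=l and u=u and q=q and h=h and \<nu>=\<nu>] by (auto simp: X_def S_def Q_def)
    define C where "C = Q eb (x K)"
    obtain c where c: "c > 0" "\<forall>z\<in>X \<inter> S. Q eb z \<le> C \<longrightarrow> (\<forall>j. c \<le> \<bar>g z $ j\<bar>)"
      using pen_bounds(2)[OF assms(1,2) ebpos, where l=l and u=u and q=q and h=h and \<nu>=\<nu> and C=C] by (auto simp: X_def S_def Q_def)
    have tele: "Q eb (x (K + m)) \<le> C - \<gamma> * (\<Sum>j<m. s (K + j))" for m
    proof (induction m)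
      case 0 then show ?case by (simp add: C_def)
    next
      case (Suc m)
      have "Q eb (x (K + Suc m)) \<le> Q eb (x (K + m)) - \<gamma> * s (K + m)"
        using outer[of "K + m"] const[of m] by simp
      then show ?case using Suc by (simp add: algebra_simps)
    qed
    have QxC: "Q eb (x k) \<le> C" if "k \<ge> K" for k
    proof -
      have "Q eb (x (K + (k - K))) \<le> C - \<gamma> * (\<Sum>j<k - K. s (K + j))" by (rule tele)
      moreover have "0 \<le> \<gamma> * (\<Sum>j<k - K. s (K + j))" using assms(8) s0 by (simp add: sum_nonneg)
      ultimately show ?thesis using that by simp
    qed
    have sumb: "(\<Sum>j\<le>m. s (K + j)) \<le> (C - Pmin) / \<gamma>" for m
    proof -
      have "Pmin \<le> Q eb (x (K + Suc m))" using Pmin xmem by blast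
      then have "\<gamma> * (\<Sum>j<Suc m. s (K + j)) \<le> C - Pmin" using tele[of "Suc m"] by simp
      then show ?thesis using assms(8) by (simp add: field_simps lessThan_Suc_atMost)
    qed
    have "summable (\<lambda>j. s (K + j))"
      by (rule bounded_imp_summable[OF s0 sumb])
    then have sl: "(\<lambda>j. s (K + j)) \<longlonglongrightarrow> 0" by (rule summable_LIMSEQ_zero)
    have alim: "(\<lambda>k. alpha k i) \<longlonglongrightarrow> 0" if i: "i < n" for i
    proof -
      have sq: "(\<lambda>j. sqrt (s (K + j))) \<longlonglongrightarrow> sqrt 0" using sl by (rule tendsto_real_sqrt)
      have nb: "norm (alpha (j + K) i) \<le> sqrt (s (K + j))" for j
      proof -
        have "(alpha (j + K) i)\<^sup>2 \<le> s (K + j)" unfolding s_def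
          using i unfolding add.commute[of j K] by (intro member_le_sum) auto
        then show ?thesis by (simp add: real_le_rsqrt)
      qed
      have "(\<lambda>j. alpha (j + K) i) \<longlonglongrightarrow> 0"
      proof (rule Lim_null_comparison[where g = "\<lambda>j. sqrt (s (K + j))"])
        show "\<forall>\<^sub>F j in sequentially. norm (alpha (j + K) i) \<le> sqrt (s (K + j))"
          using nb by simp
        show "(\<lambda>j. sqrt (s (K + j))) \<longlonglongrightarrow> 0" using sq by simp
      qed
      then show ?thesis by (rule LIMSEQ_offset)
    qed
    have tlim: "(\<lambda>k. atil k i) \<longlonglongrightarrow> 0" if i: "i < n" for i
      using atil_to_zero[OF alim[OF i], of "\<lambda>k. atil k i" \<theta>] dalt[OF i] assms(9,10) by auto
    define c' where "c' = min (eb powr pe) (c\<^sup>2) / 2"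
    have c'pos: "c' > 0" using c ebpos by (simp add: c'_def)
    have ev: "eventually (\<lambda>k. \<forall>i\<in>{..<n}. \<bar>atil k i\<bar> < c' \<and> \<bar>alpha k i\<bar> < c') sequentially"
    proof (rule eventually_ball_finite)
      show "\<forall>i\<in>{..<n}. eventually (\<lambda>k. \<bar>atil k i\<bar> < c' \<and> \<bar>alpha k i\<bar> < c') sequentially"
      proof
        fix i assume "i \<in> {..<n}"
        then have i: "i < n" by simp
        have "eventually (\<lambda>k. norm (atil k i - 0) < c') sequentially"
          using tlim[OF i] c'pos by (simp add: tendsto_iff dist_norm)
        moreover have "eventually (\<lambda>k. norm (alpha k i - 0) < c') sequentially"
          using alim[OF i] c'pos by (simp add: tendsto_iff dist_norm)
        ultimately show "eventually (\<lambda>k. \<bar>atil k i\<bar> < c' \<and> \<bar>alpha k i\<bar> < c') sequentially"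
          by eventually_elim auto
      qed
    qed simp
    then obtain k where k: "k \<ge> K" "\<forall>i\<in>{..<n}. \<bar>atil k i\<bar> < c' \<and> \<bar>alpha k i\<bar> < c'"
    proof -
      obtain N where N: "\<And>k. k \<ge> N \<Longrightarrow> \<forall>i\<in>{..<n}. \<bar>atil k i\<bar> < c' \<and> \<bar>alpha k i\<bar> < c'"
        using ev unfolding eventually_sequentially by blast
      show ?thesis using that[of "max N K"] N[of "max N K"] by simp
    qed
    have maxb: "(MAX i\<in>{..<n}. max (atil k i) (alpha k i)) \<le> c'"
    proof -
      have "\<forall>i\<in>{..<n}. max (atil k i) (alpha k i) \<le> c'" 
      proof
        fix i assume "i \<in> {..<n}"
        then have "\<bar>atil k i\<bar> < c'" "\<bar>alpha k i\<bar> < c'" using k(2) by auto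
        then show "max (atil k i) (alpha k i) \<le> c'" by (simp add: abs_less_iff)
      qed
      then show ?thesis using n0 by (subst Max_le_iff) auto
    qed
    have fin: "finite {\<bar>g (y k i) $ j\<bar> | i j. i \<le> n}"
    proof -
      have "{\<bar>g (y k i) $ j\<bar> | i j. i \<le> n} = (\<lambda>(i, j). \<bar>g (y k i) $ j\<bar>) ` ({..n} \<times> UNIV)"
        by auto
      then show ?thesis by simp
    qed
    have ne: "{\<bar>g (y k i) $ j\<bar> | i j. i \<le> n} \<noteq> {}" by blast
    have "c \<le> Min {\<bar>g (y k i) $ j\<bar> | i j. i \<le> n}"
    proof -
      have "c \<le> \<bar>g (y k i) $ j\<bar>" if "i \<le> n" for i j
      proof -
        have "y k i \<in> S \<inter> X" "Q eb (y k i) \<le> Q eb (x k) - \<gamma> * (\<Sum>j<i. (alpha k j)\<^sup>2)"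
          using inner[OF that, of k] constk[OF k(1)] by auto
        moreover have "0 \<le> \<gamma> * (\<Sum>j<i. (alpha k j)\<^sup>2)" using assms(8) by (simp add: sum_nonneg)
        ultimately have "Q eb (y k i) \<le> C" using QxC[OF k(1)] by simp
        then show ?thesis using c(2) \<open>y k i \<in> S \<inter> X\<close> by blast
      qed
      then show ?thesis using fin ne by auto
    qed
    then have "c\<^sup>2 \<le> (Min {\<bar>g (y k i) $ j\<bar> | i j. i \<le> n})\<^sup>2"
      using c(1) by (simp add: power_mono)
    then have "c' < min (eps k powr pe) ((Min {\<bar>g (y k i) $ j\<bar> | i j. i \<le> n})\<^sup>2)"
    proof -
      define M where "M = (Min {\<bar>g (y k i) $ j\<bar> | i j. i \<le> n})\<^sup>2"
      have a: "eb powr pe > 0" using ebpos by simp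
      have b: "c\<^sup>2 > 0" using c(1) by simp
      have "c\<^sup>2 \<le> M" using \<open>c\<^sup>2 \<le> _\<close> by (simp add: M_def)
      then have "c' < min (eb powr pe) M" using a b unfolding c'_def by linarith
      then show ?thesis using constk[OF k(1)] by (simp add: M_def)
    qed
    then have "eps (Suc k) = \<theta> * eps k" using epsS[of k] maxb by simp
    moreover have "eps (Suc k) = eps k" using constk[OF k(1)] constk[of "Suc k"] k(1) by simp
    ultimately show False using epspos[of k] assms(10) by simp
  qed
qed


end
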